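(* Let $n>s\geq 1$ be integers and let ${\bm r}=(r_0,\dots,r_s)\in\mathbb{R}^{s+1}$ be such that $g_{\bm r}(x)=\sum_{k=0}^{s} r_k x^k$ is a separable polynomial of degree $s$ (so $r_s\neq 0$) with exactly $\gamma$ real roots ($0\le\gamma\le s$). For $t$ an indeterminate, let $f_{\bm r}(t;x)=x^n+t\,g_{\bm r}(x)\in\mathbb{R}(t)[x]$, and let $$P_{\bm r}(t)=\det M_n\big(f_{\bm r}(t;x),\,f'_{\bm r}(t;x)\big)\in\mathbb{R}[t],$$ where $f'_{\bm r}$ is the derivative with respect to $x$. Let $\alpha_{\bm r}=\max\{\alpha\in\mathbb{R}\mid P_{\bm r}(\alpha)=0\}$. Then for every real $\xi>\alpha_{\bm r}$, the number $N_{f_{\bm r}(\xi;x)}$ of distinct real roots of $f_{\bm r}(\xi;x)=x^n+\xi g_{\bm r}(x)$ equals $$N_{f_{\bm r}(\xi;x)}=\begin{cases}\gamma+1 & \text{if } n-s \text{ is odd},\\ \gamma & \text{if } n-s \text{ is even and } r_s>0,\\ \gamma+2 & \text{if } n-s \text{ is even and } r_s<0.\end{cases}$$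
   Context: Bezoutian: for polynomials $f_1,f_2$ over a field $F$ of characteristic $0$ and an integer $n\ge\max\{\deg f_1,\deg f_2\}$, write $\frac{f_1(x)f_2(y)-f_1(y)f_2(x)}{x-y}=\sum_{i,j=1}^n\alpha_{ij}x^{n-i}y^{n-j}\in F[x,y]$ and set $M_n(f_1,f_2)=(\alpha_{ij})_{1\le i,j\le n}$, a symmetric $n\times n$ matrix. For a real polynomial $h$, $N_h$ denotes the number of distinct real roots of $h$. Note $P_{\bm r}(0)=0$ since $f_{\bm r}(0;x)=x^n$. *)

theory Defs
  imports "HOL-Computational_Algebra.Polynomial" "Jordan_Normal_Form.Determinant"
begin

text \<open>Coefficient of x^p y^q in (f1(x) f2(y) - f1(y) f2(x)) / (x - y).
  Writing f1(x)f2(y) - f1(y)f2(x) = sum d_kl x^k y^l with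
  d_kl = a_k b_l - a_l b_k, the quotient B = sum c_pq x^p y^q satisfies
  d_kl = c_(k-1,l) - c_(k,l-1), hence c_pq = sum_(m=0..q) d_(p+1+m, q-m).\<close>
definition bez_coeff :: "'a::comm_ring_1 poly \<Rightarrow> 'a poly \<Rightarrow> nat \<Rightarrow> nat \<Rightarrow> 'a" where
  "bez_coeff f1 f2 p q =
     (\<Sum>m\<le>q. coeff f1 (p+1+m) * coeff f2 (q-m) - coeff f1 (q-m) * coeff f2 (p+1+m))"

text \<open>Bezoutian M_n(f1,f2) = (alpha_ij)_(1<=i,j<=n), alpha_ij = coefficient of
  x^(n-i) y^(n-j); with 0-based indices i,j < n the entry is the coefficient of
  x^(n-1-i) y^(n-1-j).\<close>
definition bezoutian :: "nat \<Rightarrow> 'a::comm_ring_1 poly \<Rightarrow> 'a poly \<Rightarrow> 'a mat" where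
  "bezoutian n f1 f2 = mat n n (\<lambda>(i,j). bez_coeff f1 f2 (n-1-i) (n-1-j))"

definition num_real_roots :: "real poly \<Rightarrow> nat" where
  "num_real_roots h = card {x::real. poly h x = 0}"

text \<open>f_r(t;x) = x^n + t g_r(x), as a polynomial in x with coefficients in R[t].\<close>
definition f_r :: "nat \<Rightarrow> real poly \<Rightarrow> real poly poly" where
  "f_r n g = monom 1 n + smult [:0, 1:] (map_poly (\<lambda>c. [:c:]) g)"

definition P_r :: "nat \<Rightarrow> real poly \<Rightarrow> real poly" where
  "P_r n g = det (bezoutian n (f_r n g) (pderiv (f_r n g)))"

end

theory Submission
  imports Defs "HOL-Computational_Algebra.Fundamental_Theorem_Algebra"
begin

abbreviation bd :: "'a::comm_ring_1 poly \<Rightarrow> 'a poly \<Rightarrow> nat \<Rightarrow> nat \<Rightarrow> 'a" where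
  "bd f1 f2 k l \<equiv> coeff f1 k * coeff f2 l - coeff f1 l * coeff f2 k"

lemma anti_sum:
  fixes e :: "nat \<Rightarrow> nat \<Rightarrow> 'a::field_char_0"
  assumes "\<And>x y. e x y = - e y x"
  shows "(\<Sum>m\<le>N. e m (N - m)) = 0"
proof -
  have "(\<Sum>m\<le>N. e m (N - m)) = (\<Sum>m\<le>N. e (N - m) (N - (N - m)))"
    by (rule sum.reindex_bij_witness[where i="\<lambda>m. N - m" and j="\<lambda>m. N - m"]) auto
  also have "\<dots> = (\<Sum>m\<le>N. - e m (N - m))"
    by (intro sum.cong) (auto simp: assms[of "N - _"])
  also have "\<dots> = - (\<Sum>m\<le>N. e m (N - m))" by (simp add: sum_negf)
  finally show ?thesis by simp
qed

lemma bc_R1: "bez_coeff f1 f2 p 0 = bd f1 f2 (Suc p) 0"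
  by (simp add: bez_coeff_def)

lemma bc_R2: "bez_coeff f1 f2 p (Suc q) = bd f1 f2 (Suc p) (Suc q) + bez_coeff f1 f2 (Suc p) q"
  unfolding bez_coeff_def by (subst sum.atMost_Suc_shift) simp

lemma bc_Z1:
  assumes "degree f1 \<le> n" "degree f2 \<le> n" "n \<le> p"
  shows "bez_coeff f1 f2 p q = 0"
  unfolding bez_coeff_def using assms
  by (intro sum.neutral) (auto simp: coeff_eq_0)

lemma bc_Z0:
  fixes f1 f2 :: "'a::field_char_0 poly"
  shows "bez_coeff f1 f2 0 q = - bd f1 f2 0 (Suc q)"
proof -
  have "(\<Sum>m\<le>Suc q. bd f1 f2 m (Suc q - m)) = 0"
    by (rule anti_sum) (simp add: algebra_simps)
  also have "(\<Sum>m\<le>Suc q. bd f1 f2 m (Suc q - m)) = bd f1 f2 0 (Suc q) + bez_coeff f1 f2 0 q"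
    unfolding bez_coeff_def by (subst sum.atMost_Suc_shift) simp
  finally show ?thesis by (metis eq_neg_iff_add_eq_0 add.commute)
qed

lemma bc_Z2:
  fixes f1 f2 :: "'a::field_char_0 poly"
  assumes "degree f1 \<le> n" "degree f2 \<le> n"
  shows "bez_coeff f1 f2 p n = 0"
proof (cases "n \<le> p")
  case True thus ?thesis using bc_Z1[OF assms] by blast
next
  case False
  define N where "N = n - p - 1"
  have "(\<Sum>m\<le>N. bd f1 f2 (p+1+m) (n-m)) = (\<Sum>m\<le>n. bd f1 f2 (p+1+m) (n-m))"
  proof (rule sum.mono_neutral_left)
    show "{..N} \<subseteq> {..n}" by (auto simp: N_def)
    show "\<forall>i\<in>{..n} - {..N}. bd f1 f2 (p + 1 + i) (n - i) = 0"
    proof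
      fix i assume "i \<in> {..n} - {..N}"
      hence "p + 1 + i > n" using False by (auto simp: N_def)
      thus "bd f1 f2 (p + 1 + i) (n - i) = 0" using assms by (simp add: coeff_eq_0)
    qed
  qed simp
  hence "bez_coeff f1 f2 p n = (\<Sum>m\<le>N. bd f1 f2 (p+1+m) (n-m))"
    unfolding bez_coeff_def by simp
  also have "\<dots> = (\<Sum>m\<le>N. (\<lambda>x y. bd f1 f2 (p+1+x) (p+1+y)) m (N - m))"
  proof (intro sum.cong refl)
    fix m assume "m \<in> {..N}"
    hence "n - m = p + 1 + (N - m)" using False by (auto simp: N_def)
    thus "bd f1 f2 (p+1+m) (n-m) = (\<lambda>x y. bd f1 f2 (p+1+x) (p+1+y)) m (N - m)" by simp
  qed
  also have "\<dots> = 0" by (rule anti_sum) (simp add: algebra_simps)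
  finally show ?thesis .
qed

definition bzQ :: "'a::comm_ring_1 poly \<Rightarrow> 'a poly \<Rightarrow> nat \<Rightarrow> 'a \<Rightarrow> 'a poly" where
  "bzQ f1 f2 n b = (\<Sum>p<n. monom (\<Sum>q<n. bez_coeff f1 f2 p q * b^q) p)"

lemma coeff_bzQ:
  assumes "degree f1 \<le> n" "degree f2 \<le> n"
  shows "coeff (bzQ f1 f2 n b) k = (\<Sum>q<n. bez_coeff f1 f2 k q * b^q)"
proof -
  have "coeff (bzQ f1 f2 n b) k = (\<Sum>p<n. if p = k then (\<Sum>q<n. bez_coeff f1 f2 p q * b^q) else 0)"
    unfolding bzQ_def coeff_sum coeff_monom by (intro sum.cong) auto
  also have "\<dots> = (if k < n then (\<Sum>q<n. bez_coeff f1 f2 k q * b^q) else 0)"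
    by (simp add: sum.delta')
  also have "\<dots> = (\<Sum>q<n. bez_coeff f1 f2 k q * b^q)"
    using bc_Z1[OF assms] by auto
  finally show ?thesis .
qed

lemma u_Suc_n:
  fixes f1 f2 :: "'a::field_char_0 poly"
  assumes "degree f1 \<le> n" "degree f2 \<le> n"
  shows "(\<Sum>q<n. bez_coeff f1 f2 k q * b^q) = (\<Sum>q<Suc n. bez_coeff f1 f2 k q * b^q)"
  using bc_Z2[OF assms] by simp

lemma u_step:
  fixes f1 f2 :: "'a::field_char_0 poly"
  assumes "degree f1 \<le> n" "degree f2 \<le> n"
  shows "(\<Sum>q<n. bez_coeff f1 f2 p q * b^q) =
     (\<Sum>q<Suc n. bd f1 f2 (Suc p) q * b^q) + b * (\<Sum>q<n. bez_coeff f1 f2 (Suc p) q * b^q)"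
proof -
  have "(\<Sum>q<n. bez_coeff f1 f2 p q * b^q) = (\<Sum>q<Suc n. bez_coeff f1 f2 p q * b^q)"
    by (rule u_Suc_n[OF assms])
  also have "\<dots> = bd f1 f2 (Suc p) 0 + (\<Sum>q<n. (bd f1 f2 (Suc p) (Suc q) + bez_coeff f1 f2 (Suc p) q) * b^Suc q)"
    by (subst sum.lessThan_Suc_shift) (simp add: bc_R1 bc_R2)
  also have "\<dots> = (bd f1 f2 (Suc p) 0 + (\<Sum>q<n. bd f1 f2 (Suc p) (Suc q) * b^Suc q))
       + b * (\<Sum>q<n. bez_coeff f1 f2 (Suc p) q * b^q)"
    by (simp add: distrib_right distrib_left sum.distrib sum_distrib_left mult_ac)
  also have "bd f1 f2 (Suc p) 0 + (\<Sum>q<n. bd f1 f2 (Suc p) (Suc q) * b^Suc q) = (\<Sum>q<Suc n. bd f1 f2 (Suc p) q * b^q)"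
    by (subst sum.lessThan_Suc_shift) simp
  finally show ?thesis .
qed

lemma u_zero:
  fixes f1 f2 :: "'a::field_char_0 poly" and b :: 'a and n :: nat
  shows "b * (\<Sum>q<n. bez_coeff f1 f2 0 q * b^q) = - (\<Sum>q<Suc n. bd f1 f2 0 q * b^q)"
proof -
  have "(\<Sum>q<Suc n. bd f1 f2 0 q * b^q) = (\<Sum>q<n. bd f1 f2 0 (Suc q) * b^Suc q)"
    by (subst sum.lessThan_Suc_shift) simp
  also have "\<dots> = (\<Sum>q<n. - (b * (bez_coeff f1 f2 0 q * b^q)))"
    by (intro sum.cong refl) (simp add: bc_Z0 algebra_simps)
  also have "\<dots> = - (b * (\<Sum>q<n. bez_coeff f1 f2 0 q * b^q))"
    by (simp add: sum_distrib_left sum_negf)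
  finally show ?thesis by simp
qed

lemma poly_as_sum:
  fixes f :: "'a::comm_ring_1 poly"
  assumes "degree f \<le> n"
  shows "poly f b = (\<Sum>q<Suc n. coeff f q * b^q)"
proof -
  have "poly f b = (\<Sum>q\<le>degree f. coeff f q * b^q)" by (rule poly_altdef)
  also have "\<dots> = (\<Sum>q<Suc n. coeff f q * b^q)"
    by (rule sum.mono_neutral_left) (use assms in \<open>auto simp: coeff_eq_0\<close>)
  finally show ?thesis .
qed

lemma bz_ident:
  fixes f1 f2 :: "'a::field_char_0 poly"
  assumes "degree f1 \<le> n" "degree f2 \<le> n"
  shows "[:-b, 1:] * bzQ f1 f2 n b = smult (poly f2 b) f1 - smult (poly f1 b) f2"
proof (rule poly_eqI)
  fix k
  have rhs: "coeff (smult (poly f2 b) f1 - smult (poly f1 b) f2) k = (\<Sum>q<Suc n. bd f1 f2 k q * b^q)"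
    by (simp add: poly_as_sum[OF assms(1)] poly_as_sum[OF assms(2)] sum_distrib_left
          sum_distrib_right sum_subtractf[symmetric] algebra_simps)
  have lhs: "[:-b, 1:] * bzQ f1 f2 n b = smult (-b) (bzQ f1 f2 n b) + pCons 0 (bzQ f1 f2 n b)"
    by (simp add: mult_pCons_left)
  show "coeff ([:-b, 1:] * bzQ f1 f2 n b) k = coeff (smult (poly f2 b) f1 - smult (poly f1 b) f2) k"
  proof (cases k)
    case 0
    have "b * (\<Sum>q<n. bez_coeff f1 f2 0 q * b^q) = - (\<Sum>q<Suc n. bd f1 f2 0 q * b^q)"
      by (rule u_zero)
    thus ?thesis unfolding rhs lhs using 0
      by (simp add: coeff_bzQ[OF assms] del: sum.lessThan_Suc)
  next
    case (Suc p) thus ?thesis unfolding rhs lhs using u_step[OF assms, of p b]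
      by (simp add: coeff_bzQ[OF assms])
  qed
qed

lemma poly_bzQ_diag:
  fixes f1 f2 :: "'a::field_char_0 poly"
  assumes "degree f1 \<le> n" "degree f2 \<le> n"
  shows "poly (bzQ f1 f2 n b) b = poly (pderiv f1) b * poly f2 b - poly f1 b * poly (pderiv f2) b"
proof -
  have "pderiv ([:-b, 1:] * bzQ f1 f2 n b) = pderiv (smult (poly f2 b) f1 - smult (poly f1 b) f2)"
    by (simp only: bz_ident[OF assms])
  hence "poly (pderiv ([:-b, 1:] * bzQ f1 f2 n b)) b = poly (pderiv (smult (poly f2 b) f1 - smult (poly f1 b) f2)) b"
    by simp
  thus ?thesis by (simp add: pderiv_mult pderiv_diff pderiv_smult pderiv_pCons algebra_simps)
qed

definition vv :: "nat \<Rightarrow> 'a::comm_ring_1 \<Rightarrow> 'a vec" where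
  "vv n a = vec n (\<lambda>i. a ^ (n - 1 - i))"

lemma bez_mat_vec:
  assumes "i < n"
  shows "(bezoutian n f1 f2 *\<^sub>v vv n b) $ i = (\<Sum>q<n. bez_coeff f1 f2 (n - 1 - i) q * b^q)"
proof -
  have "(bezoutian n f1 f2 *\<^sub>v vv n b) $ i = (\<Sum>j<n. bez_coeff f1 f2 (n - 1 - i) (n - Suc j) * b^(n - Suc j))"
    using assms by (simp add: bezoutian_def vv_def scalar_prod_def atLeast0LessThan)
  also have "\<dots> = (\<Sum>q<n. bez_coeff f1 f2 (n - 1 - i) q * b^q)"
    by (rule sum.nat_diff_reindex[where g="\<lambda>q. bez_coeff f1 f2 (n - 1 - i) q * b^q"])
  finally show ?thesis .
qed

lemma poly_bzQ: "poly (bzQ f1 f2 n b) a = (\<Sum>p<n. (\<Sum>q<n. bez_coeff f1 f2 p q * b^q) * a^p)"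
  by (simp add: bzQ_def poly_sum poly_monom)

lemma dim_bez[simp]: "dim_row (bezoutian n f1 f2) = n" "dim_col (bezoutian n f1 f2) = n"
  by (simp_all add: bezoutian_def)

lemma bez_quad:
  "vv n a \<bullet> (bezoutian n f1 f2 *\<^sub>v vv n b) = poly (bzQ f1 f2 n b) a"
proof -
  have "vv n a \<bullet> (bezoutian n f1 f2 *\<^sub>v vv n b) =
     (\<Sum>i<n. vv n a $ i * (bezoutian n f1 f2 *\<^sub>v vv n b) $ i)"
    by (simp add: scalar_prod_def atLeast0LessThan del: index_mult_mat_vec)
  also have "\<dots> = (\<Sum>i<n. a^(n - Suc i) * (\<Sum>q<n. bez_coeff f1 f2 (n - Suc i) q * b^q))"
  proof (intro sum.cong refl)
    fix i assume "i \<in> {..<n}"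
    thus "vv n a $ i * (bezoutian n f1 f2 *\<^sub>v vv n b) $ i = a^(n - Suc i) * (\<Sum>q<n. bez_coeff f1 f2 (n - Suc i) q * b^q)"
      by (subst bez_mat_vec) (auto simp: vv_def)
  qed
  also have "\<dots> = (\<Sum>p<n. a^p * (\<Sum>q<n. bez_coeff f1 f2 p q * b^q))"
    by (rule sum.nat_diff_reindex[where g="\<lambda>p. a^p * (\<Sum>q<n. bez_coeff f1 f2 p q * b^q)"])
  finally show ?thesis by (simp add: poly_bzQ mult.commute)
qed

lemma bezoutian_carrier: "bezoutian n f1 f2 \<in> carrier_mat n n"
  by (simp add: bezoutian_def)

lemma det_bez_zero:
  fixes f1 f2 :: "'a::field_char_0 poly"
  assumes "degree f1 \<le> n" "degree f2 \<le> n" "1 \<le> n"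
    and "poly f1 r = 0" "poly f2 r = 0"
  shows "det (bezoutian n f1 f2) = 0"
proof -
  have "[:-r, 1:] * bzQ f1 f2 n r = 0" using bz_ident[OF assms(1,2), of r] assms(4,5) by simp
  moreover have "[:-r, 1:] \<noteq> (0 :: 'a poly)" by simp
  ultimately have Q0: "bzQ f1 f2 n r = 0" by (metis mult_eq_0_iff)
  have "bezoutian n f1 f2 *\<^sub>v vv n r = 0\<^sub>v n"
  proof (rule eq_vecI)
    fix i assume i: "i < dim_vec (0\<^sub>v n :: 'a vec)"
    hence "i < n" by simp
    have "(bezoutian n f1 f2 *\<^sub>v vv n r) $ i = coeff (bzQ f1 f2 n r) (n - 1 - i)"
      using bez_mat_vec[OF \<open>i < n\<close>] coeff_bzQ[OF assms(1,2)] by simp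
    thus "(bezoutian n f1 f2 *\<^sub>v vv n r) $ i = 0\<^sub>v n $ i" using Q0 \<open>i < n\<close> by simp
  qed (simp add: bezoutian_def)
  moreover have "vv n r \<noteq> 0\<^sub>v n"
  proof
    assume "vv n r = 0\<^sub>v n"
    hence "vv n r $ (n - 1) = 0" using assms(3) by simp
    thus False using assms(3) by (simp add: vv_def)
  qed
  moreover have "vv n r \<in> carrier_vec n" by (simp add: vv_def)
  ultimately show ?thesis
    using det_0_iff_vec_prod_zero_field[OF bezoutian_carrier] by blast
qed

lemma det_bez_nonzero:
  fixes f :: "'a::field_char_0 poly"
  assumes deg: "degree f \<le> n" and len: "length rs = n" and dist: "distinct rs"
    and roots: "\<forall>r\<in>set rs. poly f r = 0 \<and> poly (pderiv f) r \<noteq> 0"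
  shows "det (bezoutian n f (pderiv f)) \<noteq> 0"
proof -
  let ?M = "bezoutian n f (pderiv f)"
  have deg': "degree (pderiv f) \<le> n" using deg by (simp add: degree_pderiv)
  define W where "W = mat n n (\<lambda>(i,j). (rs!j)^(n-1-i))"
  have W: "W \<in> carrier_mat n n" by (simp add: W_def)
  have M: "?M \<in> carrier_mat n n" by (rule bezoutian_carrier)
  have colW: "col W j = vv n (rs!j)" if "j < n" for j
    by (rule eq_vecI) (use that in \<open>auto simp: W_def vv_def\<close>)
  define D where "D = transpose_mat W * (?M * W)"
  have D: "D \<in> carrier_mat n n" using W M by (simp add: D_def)
  have Dij: "D $$ (i,j) = poly (bzQ f (pderiv f) n (rs!j)) (rs!i)" if "i < n" "j < n" for i j
  proof -
    have "D $$ (i,j) = row (transpose_mat W) i \<bullet> col (?M * W) j"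
      using that W M by (simp add: D_def)
    also have "\<dots> = col W i \<bullet> (?M *\<^sub>v col W j)"
    proof -
      have r: "row (transpose_mat W) i = col W i" using that W by simp
      have c: "col (?M * W) j = ?M *\<^sub>v col W j" by (rule col_mult2[OF M W that(2)])
      show ?thesis by (simp only: r c)
    qed
    also have "\<dots> = vv n (rs!i) \<bullet> (?M *\<^sub>v vv n (rs!j))" using that by (simp add: colW)
    also have "\<dots> = poly (bzQ f (pderiv f) n (rs!j)) (rs!i)" by (rule bez_quad)
    finally show ?thesis .
  qed
  have off: "D $$ (i,j) = 0" if "i < n" "j < n" "i \<noteq> j" for i j
  proof -
    have ne: "rs!i \<noteq> rs!j" using that dist len by (simp add: nth_eq_iff_index_eq)
    have ri: "poly f (rs!i) = 0" "poly f (rs!j) = 0" using roots that len by auto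
    have "poly ([:-(rs!j), 1:] * bzQ f (pderiv f) n (rs!j)) (rs!i) = 0"
      unfolding bz_ident[OF deg deg'] using ri by simp
    hence "(rs!i - rs!j) * poly (bzQ f (pderiv f) n (rs!j)) (rs!i) = 0" by (auto simp: algebra_simps)
    thus ?thesis using ne Dij[OF that(1,2)] by auto
  qed
  have dg: "D $$ (i,i) \<noteq> 0" if "i < n" for i
  proof -
    have ri: "poly f (rs!i) = 0" "poly (pderiv f) (rs!i) \<noteq> 0" using roots that len by auto
    have "D $$ (i,i) = poly (pderiv f) (rs!i) * poly (pderiv f) (rs!i)"
      using Dij[OF that that] poly_bzQ_diag[OF deg deg', of "rs!i"] ri by simp
    thus ?thesis using ri by simp
  qed
  have ut: "upper_triangular D" using D off unfolding upper_triangular_def by auto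
  have "det D = prod_list (diag_mat D)" by (rule det_upper_triangular[OF ut D])
  also have "\<dots> \<noteq> 0" using dg D by (auto simp: diag_mat_def prod_list_zero_iff)
  finally have "det D \<noteq> 0" .
  moreover have "det D = det (transpose_mat W) * (det ?M * det W)"
    unfolding D_def using W M
    by (simp add: det_mult[of _ n] mult_carrier_mat)
  ultimately show ?thesis by auto
qed

lemma (in comm_ring_hom) map_bez:
  "map_mat hom (bezoutian n f1 f2) = bezoutian n (map_poly hom f1) (map_poly hom f2)"
  by (rule eq_matI) (auto simp: bezoutian_def bez_coeff_def hom_distribs coeff_map_poly)

lemma (in idom_hom) map_pderiv':
  "map_poly hom (pderiv p) = pderiv (map_poly hom p)"
  by (rule poly_eqI) (simp add: coeff_pderiv coeff_map_poly hom_distribs)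

lemma P_eval:
  fixes \<xi> :: real
  shows "(of_real (poly (P_r n g) \<xi>) :: 'a::{real_field, field_char_0}) =
    det (bezoutian n (map_poly of_real (monom 1 n + smult \<xi> g)) (pderiv (map_poly of_real (monom 1 n + smult \<xi> g))))"
proof -
  interpret h: idom_hom "\<lambda>p::real poly. (of_real (poly p \<xi>)::'a)"
    by unfold_locales (auto simp: of_real_mult)
  have F: "map_poly (\<lambda>p::real poly. (of_real (poly p \<xi>)::'a)) (f_r n g) = map_poly of_real (monom 1 n + smult \<xi> g)"
    by (rule poly_eqI) (auto simp: f_r_def coeff_map_poly coeff_monom)
  show ?thesis
    unfolding P_r_def h.hom_det[symmetric] h.map_bez h.map_pderiv' F ..
qed

lemma P_eval_real:
  fixes \<xi> :: real
  shows "poly (P_r n g) \<xi> = det (bezoutian n (monom 1 n + smult \<xi> g) (pderiv (monom 1 n + smult \<xi> g)))"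
  using P_eval[where 'a=real, of n g \<xi>] by (simp add: map_poly_idI)

lemma right_pos:
  fixes h :: "real poly"
  assumes "poly h c = 0" "poly (pderiv h) c > 0" "c < e"
  shows "\<exists>t. c < t \<and> t < e \<and> poly h t > 0"
proof -
  obtain d where d: "d > 0" "\<And>t. t > 0 \<Longrightarrow> t < d \<Longrightarrow> poly h c < poly h (c + t)"
    using DERIV_pos_inc_right[OF poly_DERIV[of h c] assms(2)] by blast
  define t where "t = min d (e - c) / 2"
  have "t > 0" "t < d" "t < e - c" using d assms by (auto simp: t_def)
  thus ?thesis using d(2)[of t] assms by (intro exI[of _ "c + t"]) auto
qed

lemma left_neg:
  fixes h :: "real poly"
  assumes "poly h c = 0" "poly (pderiv h) c > 0" "e < c"
  shows "\<exists>t. e < t \<and> t < c \<and> poly h t < 0"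
proof -
  obtain d where d: "d > 0" "\<And>t. t > 0 \<Longrightarrow> t < d \<Longrightarrow> poly h (c - t) < poly h c"
    using DERIV_pos_inc_left[OF poly_DERIV[of h c] assms(2)] by blast
  define t where "t = min d (c - e) / 2"
  have "t > 0" "t < d" "t < c - e" using d assms by (auto simp: t_def)
  thus ?thesis using d(2)[of t] assms by (intro exI[of _ "c - t"]) auto
qed

lemma L0:
  fixes h :: "real poly"
  assumes ab: "a < b" and ha: "poly h a \<noteq> 0" and hb: "poly h b \<noteq> 0"
    and der: "\<And>x. a < x \<Longrightarrow> x < b \<Longrightarrow> poly h x = 0 \<Longrightarrow> poly (pderiv h) x > 0"
  shows "card {x. a < x \<and> x < b \<and> poly h x = 0} = (if sgn (poly h a) = sgn (poly h b) then 0 else 1)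
     \<and> ({x. a < x \<and> x < b \<and> poly h x = 0} \<noteq> {} \<longrightarrow> poly h b > 0)"
proof -
  define Z where "Z = {x. a < x \<and> x < b \<and> poly h x = 0}"
  have h0: "h \<noteq> 0" using ha by auto
  have fin: "finite Z" unfolding Z_def
    by (rule finite_subset[OF _ poly_roots_finite[OF h0]]) auto
  show ?thesis
  proof (cases "Z = {}")
    case True
    have "sgn (poly h a) = sgn (poly h b)"
    proof (rule ccontr)
      assume "sgn (poly h a) \<noteq> sgn (poly h b)"
      hence "poly h a * poly h b < 0" using ha hb
        by (metis mult_neg_pos mult_pos_neg linorder_neqE_linordered_idom sgn_neg sgn_pos)
      then obtain x where "x > a" "x < b" "poly h x = 0" using poly_IVT[OF ab] by blast
      thus False using True by (auto simp: Z_def)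
    qed
    thus ?thesis using True by (simp add: Z_def[symmetric])
  next
    case False
    define x where "x = Max Z"
    have xZ: "x \<in> Z" and xmax: "\<And>z. z \<in> Z \<Longrightarrow> z \<le> x" using fin False by (auto simp: x_def)
    define y where "y = Min Z"
    have yZ: "y \<in> Z" and ymin: "\<And>z. z \<in> Z \<Longrightarrow> y \<le> z" using fin False by (auto simp: y_def)
    have hbpos: "poly h b > 0"
    proof (rule ccontr)
      assume "\<not> poly h b > 0"
      hence hbn: "poly h b < 0" using hb by auto
      obtain t where t: "x < t" "t < b" "poly h t > 0"
        using right_pos[of h x b] xZ der by (auto simp: Z_def)
      obtain z where "z > t" "z < b" "poly h z = 0" using poly_IVT_neg[OF t(2) t(3) hbn] by blast
      hence "z \<in> Z" using t xZ by (auto simp: Z_def)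
      thus False using xmax \<open>z > t\<close> t by fastforce
    qed
    have hapos: "poly h a < 0"
    proof (rule ccontr)
      assume "\<not> poly h a < 0"
      hence han: "poly h a > 0" using ha by auto
      obtain t where t: "a < t" "t < y" "poly h t < 0"
        using left_neg[of h y a] yZ der by (auto simp: Z_def)
      obtain z where "z > a" "z < t" "poly h z = 0" using poly_IVT_neg[OF t(1) han t(3)] by blast
      hence "z \<in> Z" using t yZ by (auto simp: Z_def)
      thus False using ymin \<open>z < t\<close> t by fastforce
    qed
    have single: "u = v" if uZ: "u \<in> Z" and vZ: "v \<in> Z" for u v
    proof (rule ccontr)
      assume "u \<noteq> v"
      then obtain u v where uv: "u \<in> Z" "v \<in> Z" "u < v" using uZ vZ
        by (metis linorder_neqE_linordered_idom)
      define Zu where "Zu = {z \<in> Z. z > u}"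
      have "finite Zu" "Zu \<noteq> {}" using fin uv by (auto simp: Zu_def)
      define v0 where "v0 = Min Zu"
      have v0: "v0 \<in> Z" "v0 > u" "\<And>z. z \<in> Z \<Longrightarrow> z > u \<Longrightarrow> v0 \<le> z"
        using \<open>finite Zu\<close> \<open>Zu \<noteq> {}\<close> Min_in[of Zu] by (auto simp: v0_def Zu_def)
      obtain t where t: "u < t" "t < v0" "poly h t > 0"
        using right_pos[of h u v0] uv v0 der by (auto simp: Z_def)
      obtain t' where t': "t < t'" "t' < v0" "poly h t' < 0"
        using left_neg[of h v0 t] v0 t der by (auto simp: Z_def)
      obtain z where z: "z > t" "z < t'" "poly h z = 0" using poly_IVT_neg[OF t'(1) t(3) t'(3)] by blast
      hence "z \<in> Z" using t t' v0 uv by (auto simp: Z_def)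
      thus False using v0(3)[of z] z t t' by force
    qed
    have "card Z = 1"
    proof -
      have "Z = {x}" using single xZ by blast
      thus ?thesis by simp
    qed
    thus ?thesis using hbpos hapos by (simp add: Z_def[symmetric])
  qed
qed

lemma no_root_same_sgn:
  fixes h :: "real poly"
  assumes "a \<le> b" "\<And>x. a \<le> x \<Longrightarrow> x \<le> b \<Longrightarrow> poly h x \<noteq> 0"
  shows "sgn (poly h a) = sgn (poly h b)"
proof (cases "a = b")
  case False
  hence ab: "a < b" using assms by auto
  have ha: "poly h a \<noteq> 0" "poly h b \<noteq> 0" using assms by auto
  show ?thesis
  proof (rule ccontr)
    assume "sgn (poly h a) \<noteq> sgn (poly h b)"
    hence "poly h a * poly h b < 0" using ha
      by (metis mult_neg_pos mult_pos_neg linorder_neqE_linordered_idom sgn_neg sgn_pos)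
    then obtain x where "x > a" "x < b" "poly h x = 0" using poly_IVT[OF ab] by blast
    thus False using assms by auto
  qed
qed simp

lemma L_weight:
  fixes h w :: "real poly"
  assumes ab: "a < b" and ha: "poly h a \<noteq> 0" and hb: "poly h b \<noteq> 0"
    and wnz: "\<And>x. a < x \<Longrightarrow> x < b \<Longrightarrow> poly w x \<noteq> 0"
    and der: "\<And>x. a < x \<Longrightarrow> x < b \<Longrightarrow> poly h x = 0 \<Longrightarrow> poly (pderiv h) x * poly w x > 0"
    and m: "a < m" "m < b"
  shows "card {x. a < x \<and> x < b \<and> poly h x = 0} = (if sgn (poly h a) = sgn (poly h b) then 0 else 1)
     \<and> ({x. a < x \<and> x < b \<and> poly h x = 0} \<noteq> {} \<longrightarrow> sgn (poly h b) = sgn (poly w m))"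
proof -
  have wsg: "sgn (poly w x) = sgn (poly w m)" if "a < x" "x < b" for x
  proof (cases "x \<le> m")
    case True
    have "\<And>y. x \<le> y \<Longrightarrow> y \<le> m \<Longrightarrow> poly w y \<noteq> 0"
    proof -
      fix y assume "x \<le> y" "y \<le> m"
      thus "poly w y \<noteq> 0" using wnz[of y] that m by linarith
    qed
    from no_root_same_sgn[OF True this] show ?thesis by simp
  next
    case False
    hence F: "m \<le> x" by simp
    have "\<And>y. m \<le> y \<Longrightarrow> y \<le> x \<Longrightarrow> poly w y \<noteq> 0"
    proof -
      fix y assume "m \<le> y" "y \<le> x"
      thus "poly w y \<noteq> 0" using wnz[of y] that m by linarith
    qed
    from no_root_same_sgn[OF F this] show ?thesis by simp
  qed
  show ?thesis
  proof (cases "poly w m > 0")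
    case True
    have "poly (pderiv h) x > 0" if "a < x" "x < b" "poly h x = 0" for x
    proof -
      have "poly w x > 0" using wsg[OF that(1,2)] True by (simp add: sgn_1_pos)
      thus ?thesis using der[OF that] by (simp add: zero_less_mult_iff)
    qed
    note L = L0[OF ab ha hb this]
    have e3: "(poly h b > 0) = (sgn (poly h b) = sgn (poly w m))" using True hb by (auto simp: sgn_if)
    show ?thesis using L unfolding e3 .
  next
    case False
    have "poly w m \<noteq> 0" using wnz m by blast
    hence wm: "poly w m < 0" using False by linarith
    have dh: "poly (pderiv (-h)) x > 0" if "a < x" "x < b" "poly (-h) x = 0" for x
    proof -
      have "poly w x < 0" using wsg[OF that(1,2)] wm by (simp add: sgn_1_neg)
      thus ?thesis using der[OF that(1,2)] that(3) by (simp add: pderiv_minus zero_less_mult_iff)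
    qed
    have ha': "poly (-h) a \<noteq> 0" and hb': "poly (-h) b \<noteq> 0" using ha hb by auto
    have L: "card {x. a < x \<and> x < b \<and> poly (-h) x = 0} = (if sgn (poly (-h) a) = sgn (poly (-h) b) then 0 else 1)
     \<and> ({x. a < x \<and> x < b \<and> poly (-h) x = 0} \<noteq> {} \<longrightarrow> poly (-h) b > 0)"
      by (rule L0[OF ab ha' hb' dh])
    have e1: "{x. a < x \<and> x < b \<and> poly (-h) x = 0} = {x. a < x \<and> x < b \<and> poly h x = 0}" by auto
    have e2: "(sgn (poly (-h) a) = sgn (poly (-h) b)) = (sgn (poly h a) = sgn (poly h b))" by (simp add: sgn_minus)
    have e3: "(poly (-h) b > 0) = (sgn (poly h b) = sgn (poly w m))" using wm hb by (auto simp: sgn_if)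
    show ?thesis using L unfolding e1 e2 e3 .
  qed
qed


lemma sgn_right:
  fixes h :: "real poly"
  assumes "poly h c = 0" "poly (pderiv h) c \<noteq> 0" "c < e"
    and "\<And>x. c < x \<Longrightarrow> x \<le> e \<Longrightarrow> poly h x \<noteq> 0"
  shows "sgn (poly h e) = sgn (poly (pderiv h) c)"
proof (cases "poly (pderiv h) c > 0")
  case True
  obtain t where t: "c < t" "t < e" "poly h t > 0" using right_pos[OF assms(1) True assms(3)] by blast
  have "sgn (poly h t) = sgn (poly h e)" using no_root_same_sgn[of t e h] t assms(4) by auto
  thus ?thesis using t True by simp
next
  case False
  hence n: "poly (pderiv (-h)) c > 0" using assms(2) by (simp add: pderiv_minus)
  obtain t where t: "c < t" "t < e" "poly (-h) t > 0" using right_pos[OF _ n assms(3)] assms(1) by auto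
  have "sgn (poly h t) = sgn (poly h e)" using no_root_same_sgn[of t e h] t assms(4) by auto
  thus ?thesis using t False assms(2) by (simp add: sgn_if)
qed

lemma sgn_left:
  fixes h :: "real poly"
  assumes "poly h c = 0" "poly (pderiv h) c \<noteq> 0" "e < c"
    and "\<And>x. e \<le> x \<Longrightarrow> x < c \<Longrightarrow> poly h x \<noteq> 0"
  shows "sgn (poly h e) = - sgn (poly (pderiv h) c)"
proof (cases "poly (pderiv h) c > 0")
  case True
  obtain t where t: "e < t" "t < c" "poly h t < 0" using left_neg[OF assms(1) True assms(3)] by blast
  have "sgn (poly h e) = sgn (poly h t)" using no_root_same_sgn[of e t h] t assms(4) by auto
  thus ?thesis using t True by simp
next
  case False
  hence n: "poly (pderiv (-h)) c > 0" using assms(2) by (simp add: pderiv_minus)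
  obtain t where t: "e < t" "t < c" "poly (-h) t < 0" using left_neg[OF _ n assms(3)] assms(1) by auto
  have "sgn (poly h e) = sgn (poly h t)" using no_root_same_sgn[of e t h] t assms(4) by auto
  thus ?thesis using t False assms(2) by (simp add: sgn_if)
qed


lemma sgn_pinf:
  fixes p :: "real poly"
  assumes "p \<noteq> 0" "\<And>x. poly p x = 0 \<Longrightarrow> x < M"
  shows "sgn (poly p M) = sgn (lead_coeff p)"
proof -
  have key: "sgn (poly q M) = 1" if lq: "lead_coeff q > 0" and rq: "\<And>x. poly q x = 0 \<Longrightarrow> x < M" for q :: "real poly"
  proof -
    obtain X where X: "\<And>x. x \<ge> X \<Longrightarrow> poly q x \<ge> lead_coeff q" using poly_pinfty_gt_lc[OF lq] by blast
    define Y where "Y = max X (M + 1)"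
    have "poly q Y > 0" using X[of Y] lq by (simp add: Y_def)
    have "poly q x \<noteq> 0" if "M \<le> x" "x \<le> Y" for x using rq[of x] that by force
    hence "sgn (poly q M) = sgn (poly q Y)" using no_root_same_sgn[of M Y q] by (auto simp: Y_def)
    thus ?thesis using \<open>poly q Y > 0\<close> by simp
  qed
  show ?thesis
  proof (cases "lead_coeff p > 0")
    case True thus ?thesis using key[of p] assms by simp
  next
    case False
    have "lead_coeff p \<noteq> 0" using assms(1) by simp
    hence "lead_coeff p < 0" using False by linarith
    hence lneg: "lead_coeff p < 0" .
    hence "lead_coeff (-p) > 0" by simp
    from key[OF this] show ?thesis using assms lneg by (auto simp: sgn_minus)
  qed
qed

lemma sgn_minf:
  fixes p :: "real poly"
  assumes "p \<noteq> 0" "\<And>x. poly p x = 0 \<Longrightarrow> x > M"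
  shows "sgn (poly p M) = (-1)^degree p * sgn (lead_coeff p)"
proof -
  define p' where "p' = pcompose p [:0, -1:]"
  have pp: "poly p' x = poly p (-x)" for x by (simp add: p'_def poly_pcompose)
  have "p' \<noteq> 0" using assms(1) by (simp add: p'_def pcompose_eq_0_iff)
  have lc: "lead_coeff p' = lead_coeff p * (-1)^degree p"
    unfolding p'_def by (subst lead_coeff_comp) auto
  have "sgn (poly p' (-M)) = sgn (lead_coeff p')"
    by (rule sgn_pinf[OF \<open>p' \<noteq> 0\<close>]) (use assms(2) pp in force)
  thus ?thesis using pp[of "-M"] lc by (simp add: sgn_mult)
qed


lemma count_partition:
  fixes Z R1 R2 :: "real set"
  assumes "finite Z" "Z \<noteq> {}" "finite R1" "finite R2"
    and "\<And>z. z \<in> Z \<Longrightarrow> z \<notin> R1 \<and> z \<notin> R2"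
    and "\<And>a b. a \<in> Z \<Longrightarrow> b \<in> Z \<Longrightarrow> a < b \<Longrightarrow> (\<forall>z\<in>Z. \<not> (a < z \<and> z < b)) \<Longrightarrow>
           card (R1 \<inter> {a<..<b}) = card (R2 \<inter> {a<..<b})"
  shows "card (R1 \<inter> {Min Z..Max Z}) = card (R2 \<inter> {Min Z..Max Z})"
  using assms
proof (induction "card Z" arbitrary: Z rule: less_induct)
  case less
  show ?case
  proof (cases "card Z = 1")
    case True
    then obtain m where Zm: "Z = {m}" by (auto simp: card_Suc_eq)
    have "R1 \<inter> {Min Z..Max Z} = {}" "R2 \<inter> {Min Z..Max Z} = {}" using less.prems(5) Zm by auto
    thus ?thesis by simp
  next
    case False
    define m where "m = Max Z"
    define Z' where "Z' = Z - {m}"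
    have mZ: "m \<in> Z" using less.prems(1,2) by (simp add: m_def)
    have cZ: "card Z' < card Z" unfolding Z'_def using mZ less.prems(1) by (metis card_Diff1_less)
    have Z'ne: "Z' \<noteq> {}"
    proof
      assume "Z' = {}"
      hence "Z = {m}" using mZ by (auto simp: Z'_def)
      thus False using False by simp
    qed
    have finZ': "finite Z'" using less.prems(1) by (simp add: Z'_def)
    define m' where "m' = Max Z'"
    have m'Z': "m' \<in> Z'" using finZ' Z'ne by (simp add: m'_def)
    have le_m: "z \<le> m" if "z \<in> Z" for z using that less.prems(1) by (simp add: m_def)
    have lt_m: "z < m" if "z \<in> Z'" for z using that le_m by (force simp: Z'_def)
    have le_m': "z \<le> m'" if "z \<in> Z'" for z using that finZ' by (simp add: m'_def)
    have m'm: "m' < m" using lt_m m'Z' by blast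
    have minZ: "Min Z = Min Z'"
    proof -
      have "Z = insert m Z'" using mZ by (auto simp: Z'_def)
      hence "Min Z = min m (Min Z')" using finZ' Z'ne by simp
      also have "\<dots> = Min Z'" using lt_m[OF Min_in[OF finZ' Z'ne]] by simp
      finally show ?thesis .
    qed
    have IH: "card (R1 \<inter> {Min Z'..Max Z'}) = card (R2 \<inter> {Min Z'..Max Z'})"
    proof (rule less.hyps[OF cZ finZ' Z'ne less.prems(3,4)])
      show "\<And>z. z \<in> Z' \<Longrightarrow> z \<notin> R1 \<and> z \<notin> R2" using less.prems(5) by (auto simp: Z'_def)
      fix a b assume ab: "a \<in> Z'" "b \<in> Z'" "a < b" "\<forall>z\<in>Z'. \<not> (a < z \<and> z < b)"
      have "\<forall>z\<in>Z. \<not> (a < z \<and> z < b)"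
      proof
        fix z assume "z \<in> Z"
        show "\<not> (a < z \<and> z < b)"
        proof (cases "z = m")
          case True thus ?thesis using lt_m[OF ab(2)] by simp
        next
          case False thus ?thesis using ab(4) \<open>z \<in> Z\<close> by (auto simp: Z'_def)
        qed
      qed
      thus "card (R1 \<inter> {a<..<b}) = card (R2 \<inter> {a<..<b})"
        using less.prems(6) ab by (auto simp: Z'_def)
    qed
    have gap: "card (R1 \<inter> {m'<..<m}) = card (R2 \<inter> {m'<..<m})"
    proof (rule less.prems(6))
      show "m' \<in> Z" using m'Z' by (simp add: Z'_def)
      show "m \<in> Z" by (rule mZ)
      show "m' < m" by (rule m'm)
      show "\<forall>z\<in>Z. \<not> (m' < z \<and> z < m)"
      proof
        fix z assume "z \<in> Z"
        show "\<not> (m' < z \<and> z < m)"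
        proof (cases "z = m")
          case False thus ?thesis using le_m'[of z] \<open>z \<in> Z\<close> by (auto simp: Z'_def)
        qed simp
      qed
    qed
    have split: "{Min Z..Max Z} = {Min Z'..m'} \<union> {m'<..<m} \<union> {m}"
    proof -
      have "Min Z' \<le> m'" using finZ' Z'ne by (simp add: m'_def)
      thus ?thesis using m'm minZ by (auto simp: m_def)
    qed
    have card3: "card (R \<inter> {Min Z..Max Z}) = card (R \<inter> {Min Z'..m'}) + card (R \<inter> {m'<..<m})"
      if "finite R" "m \<notin> R" for R :: "real set"
    proof -
      have "R \<inter> {Min Z..Max Z} = (R \<inter> {Min Z'..m'}) \<union> (R \<inter> {m'<..<m})"
        using split that(2) by auto
      moreover have "(R \<inter> {Min Z'..m'}) \<inter> (R \<inter> {m'<..<m}) = {}" by auto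
      ultimately show ?thesis using that(1) by (simp add: card_Un_disjoint)
    qed
    have "m \<notin> R1" "m \<notin> R2" using less.prems(5)[OF mZ] by auto
    thus ?thesis using card3[OF less.prems(3)] card3[OF less.prems(4)] IH gap by (simp add: m'_def)
  qed
qed

lemma evF: fixes g :: "real poly" shows "poly (monom 1 n + smult t g) x = x^n + t * poly g x"
  by (simp add: poly_monom)

lemma evF': fixes g :: "real poly" shows "poly (pderiv (monom 1 n + smult t g)) x = real n * x^(n-1) + t * poly (pderiv g) x"
  by (simp add: pderiv_add pderiv_smult pderiv_monom poly_monom)

definition qq :: "nat \<Rightarrow> real poly \<Rightarrow> real poly" where
  "qq n g = smult (real n) g - pCons 0 (pderiv g)"

lemma evq: "poly (qq n g) x = real n * poly g x - x * poly (pderiv g) x"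
  by (simp add: qq_def)

lemma keyF:
  fixes g :: "real poly"
  assumes "1 \<le> n" "poly (monom 1 n + smult t g) x = 0"
  shows "x * poly (pderiv (monom 1 n + smult t g)) x = - t * poly (qq n g) x"
proof -
  have "x^n + t * poly g x = 0" using assms(2) by (simp add: poly_monom)
  hence xn: "x^n = - t * poly g x" by linarith
  have xx: "x * x^(n-1) = x^n" using assms(1) by (cases n) auto
  have "x * poly (pderiv (monom 1 n + smult t g)) x = real n * (x * x^(n-1)) + t * (x * poly (pderiv g) x)"
    unfolding evF' by (simp only: distrib_left mult.assoc mult.left_commute)
  also have "\<dots> = real n * (- t * poly g x) + t * (x * poly (pderiv g) x)" by (simp only: xx xn)
  also have "\<dots> = - t * poly (qq n g) x" unfolding evq by (simp add: algebra_simps)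
  finally show ?thesis .
qed

lemma keyG:
  fixes g :: "real poly"
  assumes "poly g x = 0"
  shows "x * poly (pderiv g) x = - poly (qq n g) x"
  using assms by (simp add: evq)

lemma copr_root:
  fixes g :: "real poly"
  assumes "coprime g (pderiv g)" "poly g x = 0"
  shows "poly (pderiv g) x \<noteq> 0"
proof
  assume "poly (pderiv g) x = 0"
  hence "[:-x, 1:] dvd g" "[:-x, 1:] dvd pderiv g" using assms(2) by (simp_all add: poly_eq_0_iff_dvd)
  hence "is_unit [:-x, 1:]" by (intro coprime_common_divisor[OF assms(1)])
  thus False by (simp add: is_unit_iff_degree)
qed

lemma degree_qq:
  fixes g :: "real poly"
  assumes "1 \<le> s" "s < n" "degree g = s"
  shows "degree (qq n g) = s" "lead_coeff (qq n g) = (real n - real s) * lead_coeff g"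
proof -
  have c: "coeff (qq n g) k = (real n - real k) * coeff g k" for k
    by (cases k) (simp_all add: qq_def coeff_pderiv algebra_simps)
  have g0: "g \<noteq> 0" using assms by auto
  have "coeff g s \<noteq> 0" using g0 assms(3) leading_coeff_neq_0 by blast
  hence "coeff (qq n g) s \<noteq> 0" using c[of s] assms by simp
  moreover have "degree (qq n g) \<le> s"
    by (rule degree_le) (use assms in \<open>auto simp: c coeff_eq_0\<close>)
  ultimately show ds: "degree (qq n g) = s" using le_degree le_antisym by blast
  show "lead_coeff (qq n g) = (real n - real s) * lead_coeff g" using ds c assms by simp
qed

lemma count_main:
  fixes n s :: nat and g :: "real poly" and \<xi> :: real
  assumes s1: "1 \<le> s" and sn: "s < n" and dg: "degree g = s" and cop: "coprime g (pderiv g)"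
    and xi: "\<xi> > 0"
    and good: "\<And>t x. t \<ge> \<xi> \<Longrightarrow> poly (monom 1 n + smult t g) x = 0 \<Longrightarrow>
                 poly (pderiv (monom 1 n + smult t g)) x \<noteq> 0"
  shows "card {x. poly (monom 1 n + smult \<xi> g) x = 0} = card {x. poly g x = 0}
     + (if sgn (lead_coeff g) = 1 then 0 else 1)
     + (if (-1::real)^n = (-1)^s * sgn (lead_coeff g) then 0 else 1)"
proof -
  define F where "F = monom 1 n + smult \<xi> g"
  define q where "q = qq n g"
  define r where "r = lead_coeff g"
  have n1: "1 \<le> n" "2 \<le> n" using s1 sn by auto
  have g0: "g \<noteq> 0" using dg s1 by auto
  have r0: "r \<noteq> 0" using g0 by (simp add: r_def)
  have degF: "degree F = n" unfolding F_def
    by (subst degree_add_eq_left) (use dg sn xi in \<open>auto simp: degree_monom_eq\<close>)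
  have lcF: "lead_coeff F = 1" unfolding degF using dg sn by (simp add: F_def coeff_eq_0)
  have F0: "F \<noteq> 0" using lcF by auto
  have dq: "degree q = s" and lcq: "lead_coeff q = (real n - real s) * r"
    using degree_qq[OF s1 sn dg] by (simp_all add: q_def r_def)
  have q0: "q \<noteq> 0" using dq s1 by auto
  have sgnlcq: "sgn (lead_coeff q) = sgn r" using lcq sn by (simp add: sgn_mult)
  define RF where "RF = {x. poly F x = 0}"
  define RG where "RG = {x. poly g x = 0}"
  define RQ where "RQ = {x. poly q x = 0}"
  have finRF: "finite RF" using poly_roots_finite[OF F0] by (simp add: RF_def)
  have finRG: "finite RG" using poly_roots_finite[OF g0] by (simp add: RG_def)
  have finRQ: "finite RQ" using poly_roots_finite[OF q0] by (simp add: RQ_def)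
  define A where "A = RF \<union> RG \<union> RQ"
  have finA: "finite A" using finRF finRG finRQ by (simp add: A_def)
  define M where "M = Max (abs ` A \<union> {1}) + 1"
  have AM: "\<bar>x\<bar> < M" if "x \<in> A" for x
  proof -
    have "\<bar>x\<bar> \<le> Max (abs ` A \<union> {1})" using that finA by (intro Max_ge) auto
    thus ?thesis by (simp add: M_def)
  qed
  have M1: "M > 1"
  proof -
    have "1 \<le> Max (abs ` A \<union> {1})" using finA by (intro Max_ge) auto
    thus ?thesis by (simp add: M_def)
  qed
  define NZ where "NZ = A - {0}"
  define \<delta> where "\<delta> = (if NZ = {} then 1 else min 1 (Min (abs ` NZ))) / 2"
  have finNZ: "finite NZ" using finA by (simp add: NZ_def)
  have d0: "\<delta> > 0" "\<delta> < 1"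
  proof -
    have "NZ \<noteq> {} \<Longrightarrow> Min (abs ` NZ) > 0" using finNZ by (auto simp: NZ_def)
    thus "\<delta> > 0" "\<delta> < 1" by (auto simp: \<delta>_def)
  qed
  have dNZ: "\<delta> < \<bar>x\<bar>" if "x \<in> A" "x \<noteq> 0" for x
  proof -
    have xN: "x \<in> NZ" using that by (simp add: NZ_def)
    hence "Min (abs ` NZ) \<le> \<bar>x\<bar>" using finNZ by (intro Min_le) auto
    moreover have "\<bar>x\<bar> > 0" using that by simp
    ultimately show ?thesis using xN by (auto simp: \<delta>_def)
  qed
  have dM: "\<delta> < M" using d0 M1 by simp
  have evFx: "poly F x = x^n + \<xi> * poly g x" for x unfolding F_def by (rule evF)
  have F00: "poly F 0 = \<xi> * poly g 0" using n1 by (simp add: evFx)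
  have gF0: "(0 \<in> RF) = (0 \<in> RG)" using F00 xi by (simp add: RF_def RG_def)
  have qroot_g: "poly g c \<noteq> 0" if "poly q c = 0" "c \<noteq> 0" for c
  proof
    assume gc: "poly g c = 0"
    have "c * poly (pderiv g) c = 0" using keyG[OF gc, of n] that(1) by (simp add: q_def)
    thus False using copr_root[OF cop gc] that(2) by simp
  qed
  have qroot_F: "poly F c \<noteq> 0" if "poly q c = 0" "c \<noteq> 0" for c
  proof
    assume Fc: "poly F c = 0"
    have "c * poly (pderiv F) c = 0" using keyF[OF n1(1) Fc[unfolded F_def]] that(1) by (simp add: q_def F_def)
    hence "poly (pderiv F) c = 0" using that(2) by simp
    thus False using good[of \<xi> c] Fc by (simp add: F_def)
  qed
  have qroot_sgn: "sgn (poly F c) = sgn (poly g c)" if qc: "poly q c = 0" and c0: "c \<noteq> 0" for c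
  proof (rule ccontr)
    assume ne: "sgn (poly F c) \<noteq> sgn (poly g c)"
    have gc: "poly g c \<noteq> 0" by (rule qroot_g[OF qc c0])
    have Fc: "poly F c \<noteq> 0" by (rule qroot_F[OF qc c0])
    have neg: "poly F c * poly g c < 0" using ne gc Fc
      by (metis mult_neg_pos mult_pos_neg linorder_neqE_linordered_idom sgn_neg sgn_pos)
    define t where "t = - (c^n) / poly g c"
    have "t - \<xi> = - (poly F c * poly g c) / (poly g c)^2"
      using gc by (simp add: t_def evFx field_simps power2_eq_square)
    moreover have "- (poly F c * poly g c) / (poly g c)^2 > 0" using neg gc by (simp add: divide_neg_pos)
    ultimately have tx: "t \<ge> \<xi>" by simp
    have Ft: "poly (monom 1 n + smult t g) c = 0" using gc by (simp add: poly_monom t_def)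
    have "c * poly (pderiv (monom 1 n + smult t g)) c = 0" using keyF[OF n1(1) Ft] qc by (simp add: q_def)
    hence "poly (pderiv (monom 1 n + smult t g)) c = 0" using c0 by simp
    thus False using good[OF tx Ft] by simp
  qed
  have RFA: "x \<in> RF \<Longrightarrow> x \<in> A" "x \<in> RG \<Longrightarrow> x \<in> A" "x \<in> RQ \<Longrightarrow> x \<in> A" for x
    by (auto simp: A_def)
  have smallF: "poly F x \<noteq> 0" if "\<bar>x\<bar> \<le> \<delta>" "x \<noteq> 0" for x
    using dNZ[OF RFA(1), of x] that by (force simp: RF_def)
  have smallG: "poly g x \<noteq> 0" if "\<bar>x\<bar> \<le> \<delta>" "x \<noteq> 0" for x
    using dNZ[OF RFA(2), of x] that by (force simp: RG_def)
  have sgn_delta: "sgn (poly F \<delta>) = sgn (poly g \<delta>) \<and> sgn (poly F (-\<delta>)) = sgn (poly g (-\<delta>))"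
  proof (cases "poly g 0 = 0")
    case False
    have nF: "poly F x \<noteq> 0" if "\<bar>x\<bar> \<le> \<delta>" for x
      using smallF[OF that] F00 xi False by (cases "x = 0") auto
    have nG: "poly g x \<noteq> 0" if "\<bar>x\<bar> \<le> \<delta>" for x
      using smallG[OF that] False by (cases "x = 0") auto
    have a1: "sgn (poly F 0) = sgn (poly F \<delta>)" by (rule no_root_same_sgn) (use d0 nF in auto)
    have a2: "sgn (poly g 0) = sgn (poly g \<delta>)" by (rule no_root_same_sgn) (use d0 nG in auto)
    have a3: "sgn (poly F (-\<delta>)) = sgn (poly F 0)" by (rule no_root_same_sgn) (use d0 nF in auto)
    have a4: "sgn (poly g (-\<delta>)) = sgn (poly g 0)" by (rule no_root_same_sgn) (use d0 nG in auto)
    have "sgn (poly F 0) = sgn (poly g 0)" using F00 xi by (simp add: sgn_mult)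
    thus ?thesis using a1 a2 a3 a4 by simp
  next
    case True
    have g'0: "poly (pderiv g) 0 \<noteq> 0" by (rule copr_root[OF cop True])
    have F'0: "poly (pderiv F) 0 = \<xi> * poly (pderiv g) 0"
      unfolding F_def evF' using n1 by simp
    have F0z: "poly F 0 = 0" using F00 True by simp
    have F'0nz: "poly (pderiv F) 0 \<noteq> 0" using F'0 g'0 xi by simp
    have sF: "sgn (poly (pderiv F) 0) = sgn (poly (pderiv g) 0)" using F'0 xi by (simp add: sgn_mult)
    have b1: "sgn (poly F \<delta>) = sgn (poly (pderiv F) 0)"
      by (rule sgn_right[OF F0z F'0nz d0(1)]) (use smallF in auto)
    have b2: "sgn (poly g \<delta>) = sgn (poly (pderiv g) 0)"
      by (rule sgn_right[OF True g'0 d0(1)]) (use smallG in auto)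
    have b3: "sgn (poly F (-\<delta>)) = - sgn (poly (pderiv F) 0)"
      by (rule sgn_left[OF F0z F'0nz]) (use d0 smallF in auto)
    have b4: "sgn (poly g (-\<delta>)) = - sgn (poly (pderiv g) 0)"
      by (rule sgn_left[OF True g'0]) (use d0 smallG in auto)
    show ?thesis using b1 b2 b3 b4 sF by simp
  qed
  define Z0 where "Z0 = (RQ - {0}) \<union> {-\<delta>, \<delta>}"
  have finZ0: "finite Z0" using finRQ by (simp add: Z0_def)
  have Z0ne: "Z0 \<noteq> {}" by (simp add: Z0_def)
  have Zfacts: "poly F z \<noteq> 0 \<and> poly g z \<noteq> 0 \<and> sgn (poly F z) = sgn (poly g z)" if "z \<in> Z0" for z
  proof (cases "z \<in> RQ - {0}")
    case True
    hence "poly q z = 0" "z \<noteq> 0" by (auto simp: RQ_def)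
    thus ?thesis using qroot_g qroot_F qroot_sgn by blast
  next
    case False
    hence "z = -\<delta> \<or> z = \<delta>" using that by (auto simp: Z0_def)
    thus ?thesis using sgn_delta smallF smallG d0 by auto
  qed
  have Z0M: "-M < z \<and> z < M" if "z \<in> Z0" for z
  proof (cases "z \<in> RQ - {0}")
    case True thus ?thesis using AM[OF RFA(3), of z] by auto
  next
    case False thus ?thesis using that dM d0 by (auto simp: Z0_def)
  qed
  define Lo where "Lo = Min Z0"
  define Up where "Up = Max Z0"
  have LoZ: "Lo \<in> Z0" and UpZ: "Up \<in> Z0" using finZ0 Z0ne by (simp_all add: Lo_def Up_def)
  have Lo_le: "Lo \<le> z" and Up_ge: "z \<le> Up" if "z \<in> Z0" for z
    using that finZ0 by (simp_all add: Lo_def Up_def)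
  have Lod: "Lo \<le> -\<delta>" and Upd: "\<delta> \<le> Up" using Lo_le Up_ge by (auto simp: Z0_def)
  have LoM: "-M < Lo" and UpM: "Up < M" using Z0M LoZ UpZ by auto
  define w where "w = - pCons 0 q"
  have evw: "poly w x = - (x * poly q x)" for x by (simp add: w_def)
  have derF: "poly (pderiv F) x * poly w x > 0" if "poly F x = 0" "poly q x \<noteq> 0" for x
  proof -
    have "x * poly (pderiv F) x = - \<xi> * poly q x"
      using keyF[OF n1(1) that(1)[unfolded F_def]] by (simp add: F_def q_def)
    moreover have "poly (pderiv F) x * poly w x = - poly q x * (x * poly (pderiv F) x)"
      unfolding evw by (simp add: algebra_simps)
    ultimately have "poly (pderiv F) x * poly w x = \<xi> * (poly q x)^2"
      by (simp add: power2_eq_square)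
    thus ?thesis using that(2) xi by simp
  qed
  have derG: "poly (pderiv g) x * poly w x > 0" if "poly g x = 0" "poly q x \<noteq> 0" for x
  proof -
    have "x * poly (pderiv g) x = - poly q x" using keyG[OF that(1), of n] by (simp add: q_def)
    moreover have "poly (pderiv g) x * poly w x = - poly q x * (x * poly (pderiv g) x)"
      unfolding evw by (simp add: algebra_simps)
    ultimately have "poly (pderiv g) x * poly w x = (poly q x)^2"
      by (simp add: power2_eq_square)
    thus ?thesis using that(2) by simp
  qed
  have setF: "RF \<inter> {a<..<b} = {x. a < x \<and> x < b \<and> poly F x = 0}" for a b by (auto simp: RF_def)
  have setG: "RG \<inter> {a<..<b} = {x. a < x \<and> x < b \<and> poly g x = 0}" for a b by (auto simp: RG_def)
  have qZ0: "x \<in> Z0" if "poly q x = 0" "x \<noteq> 0" for x using that by (simp add: Z0_def RQ_def)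
  have mid: "card (RF \<inter> {Lo..Up}) = card (RG \<inter> {Lo..Up})"
    unfolding Lo_def Up_def
  proof (rule count_partition[OF finZ0 Z0ne finRF finRG])
    show "\<And>z. z \<in> Z0 \<Longrightarrow> z \<notin> RF \<and> z \<notin> RG" using Zfacts by (auto simp: RF_def RG_def)
    fix a b assume ab: "a \<in> Z0" "b \<in> Z0" "a < b" "\<forall>z\<in>Z0. \<not> (a < z \<and> z < b)"
    show "card (RF \<inter> {a<..<b}) = card (RG \<inter> {a<..<b})"
    proof (cases "a < 0 \<and> 0 < b")
      case True
      have m1: "-\<delta> \<in> Z0" "\<delta> \<in> Z0" by (auto simp: Z0_def)
      have "-\<delta> \<le> a" using ab(4) m1(1) True d0 by force
      have "b \<le> \<delta>" using ab(4) m1(2) True d0 by force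
      have "a = -\<delta>"
      proof (cases "a \<in> RQ - {0}")
        case True
        hence "\<delta> < \<bar>a\<bar>" using dNZ RFA(3) by blast
        thus ?thesis using \<open>-\<delta> \<le> a\<close> \<open>a < 0 \<and> 0 < b\<close> by simp
      next
        case False thus ?thesis using ab(1) \<open>a < 0 \<and> 0 < b\<close> d0 by (auto simp: Z0_def)
      qed
      have "b = \<delta>"
      proof (cases "b \<in> RQ - {0}")
        case True
        hence "\<delta> < \<bar>b\<bar>" using dNZ RFA(3) by blast
        thus ?thesis using \<open>b \<le> \<delta>\<close> \<open>a < 0 \<and> 0 < b\<close> by simp
      next
        case False thus ?thesis using ab(2) \<open>a < 0 \<and> 0 < b\<close> d0 by (auto simp: Z0_def)
      qed
      have "RF \<inter> {a<..<b} = RG \<inter> {a<..<b}"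
      proof (rule equalityI; rule subsetI)
        fix x assume x: "x \<in> RF \<inter> {a<..<b}"
        show "x \<in> RG \<inter> {a<..<b}"
        proof (cases "x = 0")
          case True thus ?thesis using x gF0 by auto
        next
          case False
          have "\<bar>x\<bar> \<le> \<delta>" using x \<open>a = -\<delta>\<close> \<open>b = \<delta>\<close> by auto
          thus ?thesis using smallF[OF _ False] x by (auto simp: RF_def)
        qed
      next
        fix x assume x: "x \<in> RG \<inter> {a<..<b}"
        show "x \<in> RF \<inter> {a<..<b}"
        proof (cases "x = 0")
          case True thus ?thesis using x gF0 by auto
        next
          case False
          have "\<bar>x\<bar> \<le> \<delta>" using x \<open>a = -\<delta>\<close> \<open>b = \<delta>\<close> by auto
          thus ?thesis using smallG[OF _ False] x by (auto simp: RG_def)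
        qed
      qed
      thus ?thesis by simp
    next
      case False
      have qnz: "poly q x \<noteq> 0" if "a < x" "x < b" for x
      proof
        assume "poly q x = 0"
        moreover have "x \<noteq> 0" using False that by auto
        ultimately have "x \<in> Z0" by (rule qZ0)
        thus False using ab(4) that by blast
      qed
      have wnz: "poly w x \<noteq> 0" if "a < x" "x < b" for x
        using qnz[OF that] False that by (auto simp: evw)
      define m where "m = (a + b) / 2"
      have m: "a < m" "m < b" using ab(3) by (auto simp: m_def)
      have LF: "card {x. a < x \<and> x < b \<and> poly F x = 0} = (if sgn (poly F a) = sgn (poly F b) then 0 else 1)"
        using L_weight[OF ab(3) _ _ wnz _ m, of F] Zfacts ab(1,2) derF qnz by blast
      have LG: "card {x. a < x \<and> x < b \<and> poly g x = 0} = (if sgn (poly g a) = sgn (poly g b) then 0 else 1)"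
        using L_weight[OF ab(3) _ _ wnz _ m, of g] Zfacts ab(1,2) derG qnz by blast
      show ?thesis unfolding setF setG LF LG using Zfacts[OF ab(1)] Zfacts[OF ab(2)] by simp
    qed
  qed
  have FM: "poly F M \<noteq> 0" "poly F (-M) \<noteq> 0" using AM RFA(1) by (force simp: RF_def)+
  have GM: "poly g M \<noteq> 0" "poly g (-M) \<noteq> 0" using AM RFA(2) by (force simp: RG_def)+
  have Fpinf: "sgn (poly F M) = 1"
    using sgn_pinf[OF F0, of M] AM RFA(1) lcF by (force simp: RF_def)
  have Gpinf: "sgn (poly g M) = sgn r"
    using sgn_pinf[OF g0, of M] AM RFA(2) by (force simp: RG_def r_def)
  have Fminf: "sgn (poly F (-M)) = (-1)^n"
    using sgn_minf[OF F0, of "-M"] AM RFA(1) lcF degF by (force simp: RF_def)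
  have Gminf: "sgn (poly g (-M)) = (-1)^s * sgn r"
    using sgn_minf[OF g0, of "-M"] AM RFA(2) dg by (force simp: RG_def r_def)
  have right: "RG \<inter> {Up<..<M} = {} \<and> card (RF \<inter> {Up<..<M}) = (if sgn r = 1 then 0 else 1)"
  proof -
    define m where "m = (Up + M) / 2"
    have m: "Up < m" "m < M" using UpM by (auto simp: m_def)
    have qnz: "poly q x \<noteq> 0" if "Up < x" for x
      using qZ0[of x] Up_ge[of x] that Upd d0 by force
    have wnz: "poly w x \<noteq> 0" if "Up < x" "x < M" for x
      using qnz[OF that(1)] that Upd d0 by (auto simp: evw)
    have sq: "sgn (poly q m) = sgn r"
    proof -
      have "sgn (poly q m) = sgn (lead_coeff q)"
      proof (rule sgn_pinf[OF q0])
        fix x assume "poly q x = 0"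
        thus "x < m" using qZ0[of x] Up_ge[of x] m Upd d0 by (cases "x = 0") force+
      qed
      thus ?thesis using sgnlcq by simp
    qed
    have sw: "sgn (poly w m) = - sgn r" using sq m Upd d0 by (simp add: evw sgn_mult)
    have LG: "card {x. Up < x \<and> x < M \<and> poly g x = 0} = (if sgn (poly g Up) = sgn (poly g M) then 0 else 1)
     \<and> ({x. Up < x \<and> x < M \<and> poly g x = 0} \<noteq> {} \<longrightarrow> sgn (poly g M) = sgn (poly w m))"
      using L_weight[OF UpM _ GM(1) wnz _ m] Zfacts UpZ derG qnz by blast
    have LF: "card {x. Up < x \<and> x < M \<and> poly F x = 0} = (if sgn (poly F Up) = sgn (poly F M) then 0 else 1)"
      using L_weight[OF UpM _ FM(1) wnz _ m] Zfacts UpZ derF qnz by blast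
    have e: "{x. Up < x \<and> x < M \<and> poly g x = 0} = {}" using LG Gpinf sw r0 by (auto simp: sgn_0_0)
    have "sgn (poly g Up) = sgn (poly g M)" using LG unfolding e by (simp split: if_splits)
    hence "sgn (poly F Up) = sgn r" using Zfacts[OF UpZ] Gpinf by simp
    thus ?thesis using e LF Fpinf unfolding setF setG by simp
  qed
  have left: "RG \<inter> {-M<..<Lo} = {} \<and> card (RF \<inter> {-M<..<Lo}) = (if (-1::real)^n = (-1)^s * sgn r then 0 else 1)"
  proof -
    define m where "m = (Lo + (-M)) / 2"
    have m: "-M < m" "m < Lo" using LoM by (auto simp: m_def)
    have qnz: "poly q x \<noteq> 0" if "x < Lo" for x
      using qZ0[of x] Lo_le[of x] that Lod d0 by force
    have wnz: "poly w x \<noteq> 0" if "-M < x" "x < Lo" for x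
      using qnz[OF that(2)] that Lod d0 by (auto simp: evw)
    have sq: "sgn (poly q m) = (-1)^s * sgn r"
    proof -
      have "sgn (poly q m) = (-1)^degree q * sgn (lead_coeff q)"
      proof (rule sgn_minf[OF q0])
        fix x assume "poly q x = 0"
        thus "x > m" using qZ0[of x] Lo_le[of x] m Lod d0 by (cases "x = 0") force+
      qed
      thus ?thesis using sgnlcq dq by simp
    qed
    have sw: "sgn (poly w m) = (-1)^s * sgn r" using sq m Lod d0 by (simp add: evw sgn_mult)
    have LG: "card {x. -M < x \<and> x < Lo \<and> poly g x = 0} = (if sgn (poly g (-M)) = sgn (poly g Lo) then 0 else 1)
     \<and> ({x. -M < x \<and> x < Lo \<and> poly g x = 0} \<noteq> {} \<longrightarrow> sgn (poly g Lo) = sgn (poly w m))"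
      using L_weight[OF LoM GM(2) _ wnz _ m] Zfacts LoZ derG qnz by blast
    have LF: "card {x. -M < x \<and> x < Lo \<and> poly F x = 0} = (if sgn (poly F (-M)) = sgn (poly F Lo) then 0 else 1)"
      using L_weight[OF LoM FM(2) _ wnz _ m] Zfacts LoZ derF qnz by blast
    have e: "{x. -M < x \<and> x < Lo \<and> poly g x = 0} = {}"
    proof (rule ccontr)
      assume ne: "{x. -M < x \<and> x < Lo \<and> poly g x = 0} \<noteq> {}"
      hence "sgn (poly g Lo) = (-1)^s * sgn r" using LG sw by simp
      hence "sgn (poly g (-M)) = sgn (poly g Lo)" using Gminf by simp
      hence "card {x. -M < x \<and> x < Lo \<and> poly g x = 0} = 0" using LG by simp
      moreover have "finite {x. -M < x \<and> x < Lo \<and> poly g x = 0}"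
        using finRG by (rule finite_subset[rotated]) (auto simp: RG_def)
      ultimately show False using ne by simp
    qed
    have "sgn (poly g (-M)) = sgn (poly g Lo)" using LG unfolding e by (simp split: if_splits)
    hence "sgn (poly F Lo) = (-1)^s * sgn r" using Zfacts[OF LoZ] Gminf by simp
    thus ?thesis using e LF Fminf unfolding setF setG by simp
  qed
  have LoUp: "Lo \<le> Up" using Lod Upd d0 by simp
  have split3: "card R = card (R \<inter> {-M<..<Lo}) + card (R \<inter> {Lo..Up}) + card (R \<inter> {Up<..<M})"
    if fin: "finite R" and sub: "\<And>x. x \<in> R \<Longrightarrow> \<bar>x\<bar> < M" for R
  proof -
    have "R = (R \<inter> {-M<..<Lo}) \<union> (R \<inter> {Lo..Up}) \<union> (R \<inter> {Up<..<M})"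
    proof (rule equalityI; rule subsetI)
      fix x assume "x \<in> R"
      thus "x \<in> (R \<inter> {-M<..<Lo}) \<union> (R \<inter> {Lo..Up}) \<union> (R \<inter> {Up<..<M})"
        using sub[of x] by auto
    qed auto
    hence "card R = card ((R \<inter> {-M<..<Lo}) \<union> (R \<inter> {Lo..Up}) \<union> (R \<inter> {Up<..<M}))" by simp
    also have "\<dots> = card ((R \<inter> {-M<..<Lo}) \<union> (R \<inter> {Lo..Up})) + card (R \<inter> {Up<..<M})"
      by (rule card_Un_disjoint) (use fin LoUp in auto)
    also have "card ((R \<inter> {-M<..<Lo}) \<union> (R \<inter> {Lo..Up})) = card (R \<inter> {-M<..<Lo}) + card (R \<inter> {Lo..Up})"
      by (rule card_Un_disjoint) (use fin in auto)
    finally show ?thesis .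
  qed
  have cF: "card RF = card (RF \<inter> {-M<..<Lo}) + card (RF \<inter> {Lo..Up}) + card (RF \<inter> {Up<..<M})"
    by (rule split3[OF finRF]) (use AM RFA(1) in blast)
  have cG: "card RG = card (RG \<inter> {-M<..<Lo}) + card (RG \<inter> {Lo..Up}) + card (RG \<inter> {Up<..<M})"
    by (rule split3[OF finRG]) (use AM RFA(2) in blast)
  have "card RF = card RG + (if sgn r = 1 then 0 else 1) + (if (-1::real)^n = (-1)^s * sgn r then 0 else 1)"
    unfolding cF cG using mid left right by simp
  thus ?thesis by (simp add: RF_def RG_def F_def r_def)
qed

lemma of_real_poly_map_poly:
  "poly (map_poly of_real p) (of_real x) = (of_real (poly p x) :: 'a::{real_algebra_1,comm_semiring_0})"
  by (induction p) (auto simp: map_poly_pCons)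

lemma P_nonzero:
  fixes n s :: nat and g :: "real poly"
  assumes s1: "1 \<le> s" and sn: "s < n" and dg: "degree g = s" and cop: "coprime g (pderiv g)"
  shows "P_r n g \<noteq> 0"
proof -
  have n2: "2 \<le> n" using s1 sn by auto
  have g0: "g \<noteq> 0" using dg s1 by auto
  define q where "q = qq n g"
  have q0: "q \<noteq> 0" using degree_qq[OF s1 sn dg] s1 by (auto simp: q_def)
  define gc where "gc = map_poly (of_real :: real \<Rightarrow> complex) g"
  define qc where "qc = map_poly (of_real :: real \<Rightarrow> complex) q"
  have qc0: "qc \<noteq> 0" using q0 by (simp add: qc_def map_poly_eq_0_iff)
  have evgc: "poly gc (of_real x) = of_real (poly g x)" for x by (simp add: gc_def of_real_poly_map_poly)
  have pgc: "pderiv gc = map_poly of_real (pderiv g)" by (simp add: gc_def of_real_hom.map_pderiv')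
  have qc_eq: "qc = smult (of_nat n) gc - pCons 0 (pderiv gc)"
  proof (rule poly_eqI)
    fix k show "coeff qc k = coeff (smult (of_nat n) gc - pCons 0 (pderiv gc)) k"
      by (cases k) (simp_all add: qc_def q_def qq_def gc_def coeff_map_poly coeff_pderiv)
  qed
  have evqc: "poly qc z = of_nat n * poly gc z - z * poly (pderiv gc) z" for z
    by (simp add: qc_eq)
  define B where "B = (\<lambda>z. - (z^n) / poly gc z) ` {z. poly qc z = 0}"
  have finB: "finite B" using poly_roots_finite[OF qc0] by (simp add: B_def)
  define Bad where "Bad = (of_real :: real \<Rightarrow> complex) -` B"
  have finBad: "finite Bad" unfolding Bad_def
    by (rule finite_vimageI[OF finB]) (simp add: inj_on_def)
  define t where "t = Max (Bad \<union> {0}) + 1"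
  have t0: "t > 0" and tB: "t \<notin> Bad"
  proof -
    have "\<And>x. x \<in> Bad \<union> {0} \<Longrightarrow> x \<le> Max (Bad \<union> {0})" using finBad by simp
    thus "t > 0" "t \<notin> Bad" by (force simp: t_def)+
  qed
  define c where "c = (of_real t :: complex)"
  have c0: "c \<noteq> 0" using t0 by (simp add: c_def)
  define Fc where "Fc = map_poly (of_real :: real \<Rightarrow> complex) (monom 1 n + smult t g)"
  have Fc_eq: "Fc = monom 1 n + smult c gc"
    by (rule poly_eqI) (simp add: Fc_def gc_def c_def coeff_map_poly coeff_monom)
  have evFc: "poly Fc z = z^n + c * poly gc z" for z by (simp add: Fc_eq poly_monom)
  have evFc': "poly (pderiv Fc) z = of_nat n * z^(n-1) + c * poly (pderiv gc) z" for z
    by (simp add: Fc_eq pderiv_add pderiv_smult pderiv_monom poly_monom)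
  have sqf: "\<not> (poly Fc z = 0 \<and> poly (pderiv Fc) z = 0)" for z
  proof
    assume "poly Fc z = 0 \<and> poly (pderiv Fc) z = 0"
    hence E1: "z^n + c * poly gc z = 0" and E2: "of_nat n * z^(n-1) + c * poly (pderiv gc) z = 0"
      using evFc evFc' by auto
    have zz: "z * z^(n-1) = z^n" using n2 by (cases n) auto
    have "0 = z * (of_nat n * z^(n-1) + c * poly (pderiv gc) z) - of_nat n * (z^n + c * poly gc z)"
      using E1 E2 by simp
    also have "\<dots> = - c * poly qc z" unfolding evqc by (simp add: algebra_simps zz[symmetric])
    finally have "poly qc z = 0" using c0 by simp
    show False
    proof (cases "poly gc z = 0")
      case True
      hence "z^n = 0" using E1 by simp
      hence z0: "z = 0" by simp
      have g00: "poly g 0 = 0" using True z0 evgc[of 0] by simp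
      have zp: "(0::complex) ^ (n - 1) = 0" using n2 by simp
      have "of_nat n * (0::complex)^(n-1) + c * poly (pderiv gc) 0 = 0" using E2 z0 by simp
      hence "c * poly (pderiv gc) 0 = 0" by (simp only: zp mult_zero_right add_0)
      hence "poly (pderiv gc) 0 = 0" using c0 by simp
      moreover have "poly (map_poly (of_real::real\<Rightarrow>complex) (pderiv g)) (of_real 0) = of_real (poly (pderiv g) 0)"
        by (rule of_real_poly_map_poly)
      ultimately have "poly (pderiv g) 0 = 0" unfolding pgc by simp
      thus False using copr_root[OF cop g00] by simp
    next
      case False
      have "c = - (z^n) / poly gc z" using E1 False by (simp add: field_simps eq_neg_iff_add_eq_0)
      hence "c \<in> B" using \<open>poly qc z = 0\<close> by (auto simp: B_def)
      hence "t \<in> Bad" by (simp add: Bad_def c_def)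
      thus False using tB by simp
    qed
  qed
  have degFc: "degree Fc = n"
  proof -
    have "degree (monom 1 n + smult t g) = n"
      by (subst degree_add_eq_left) (use dg sn t0 in \<open>auto simp: degree_monom_eq\<close>)
    thus ?thesis by (simp add: Fc_def degree_map_poly)
  qed
  have Fc0: "Fc \<noteq> 0" using degFc n2 by auto
  define R where "R = {z. poly Fc z = 0}"
  have finR: "finite R" using poly_roots_finite[OF Fc0] by (simp add: R_def)
  have "rsquarefree Fc" using sqf by (simp add: rsquarefree_roots)
  hence dec: "smult (lead_coeff Fc) (\<Prod>z\<in>R. [:-z, 1:]) = Fc"
    unfolding R_def by (rule complex_poly_decompose_rsquarefree)
  have "degree Fc = degree (\<Prod>z\<in>R. [:-z, 1:])"
    using Fc0 by (subst dec[symmetric]) simp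
  also have "\<dots> = card R" by (subst degree_prod_sum_eq) auto
  finally have cR: "card R = n" using degFc by simp
  obtain rs where rs: "set rs = R" "distinct rs" using finite_distinct_list[OF finR] by blast
  have len: "length rs = n" using rs cR distinct_card by fastforce
  have "det (bezoutian n Fc (pderiv Fc)) \<noteq> 0"
  proof (rule det_bez_nonzero[OF _ len rs(2)])
    show "degree Fc \<le> n" using degFc by simp
    show "\<forall>r\<in>set rs. poly Fc r = 0 \<and> poly (pderiv Fc) r \<noteq> 0" using rs sqf by (auto simp: R_def)
  qed
  hence "(of_real (poly (P_r n g) t) :: complex) \<noteq> 0" unfolding P_eval Fc_def[symmetric] .
  thus ?thesis by auto
qed

theorem theorem5p2:
  fixes n s \<gamma> :: nat and g :: "real poly" and \<xi> :: real
  assumes "1 \<le> s" and "s < n"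
    and "degree g = s"
    and "coprime g (pderiv g)"
    and "\<gamma> = num_real_roots g"
    and "\<xi> > Max {\<alpha>::real. poly (P_r n g) \<alpha> = 0}"
  shows "num_real_roots (monom 1 n + smult \<xi> g) =
           (if odd (n - s) then \<gamma> + 1
            else if lead_coeff g > 0 then \<gamma> else \<gamma> + 2)"
proof -
  have n2: "2 \<le> n" using assms(1,2) by auto
  have P0: "P_r n g \<noteq> 0" by (rule P_nonzero[OF assms(1-4)])
  define S where "S = {\<alpha>::real. poly (P_r n g) \<alpha> = 0}"
  have finS: "finite S" using poly_roots_finite[OF P0] by (simp add: S_def)
  have dF: "degree (monom 1 n + smult t g) \<le> n" for t :: real
    using assms(2,3) by (intro degree_add_le) (auto simp: degree_monom_le)
  have bad: "poly (P_r n g) t = 0" if "poly (monom 1 n + smult t g) x = 0"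
       "poly (pderiv (monom 1 n + smult t g)) x = 0" for t x
    unfolding P_eval_real
  proof (rule det_bez_zero[OF dF _ _ that])
    show "degree (pderiv (monom 1 n + smult t g)) \<le> n" using dF[of t] by (simp add: degree_pderiv)
  qed (use n2 in auto)
  have "poly (monom 1 n + smult 0 g) 0 = 0" using n2 by (simp add: poly_monom)
  moreover have "poly (pderiv (monom 1 n + smult 0 g)) 0 = 0" using n2 by (simp add: pderiv_monom poly_monom)
  ultimately have "0 \<in> S" using bad[of 0 0] by (simp add: S_def)
  hence "0 \<le> Max S" using finS by simp
  hence xi: "\<xi> > 0" using assms(6) by (simp add: S_def)
  have good: "poly (pderiv (monom 1 n + smult t g)) x \<noteq> 0"
    if "t \<ge> \<xi>" "poly (monom 1 n + smult t g) x = 0" for t x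
  proof
    assume "poly (pderiv (monom 1 n + smult t g)) x = 0"
    hence "t \<in> S" using bad[OF that(2)] by (simp add: S_def)
    hence "t \<le> Max S" using finS by simp
    thus False using that(1) assms(6) by (simp add: S_def)
  qed
  have cm: "card {x. poly (monom 1 n + smult \<xi> g) x = 0} = card {x. poly g x = 0}
     + (if sgn (lead_coeff g) = 1 then 0 else 1)
     + (if (-1::real)^n = (-1)^s * sgn (lead_coeff g) then 0 else 1)"
    by (rule count_main[OF assms(1-4) xi good])
  have r0: "lead_coeff g \<noteq> 0" using assms(1,3) by auto
  have pw: "(-1::real)^n = (-1)^s * (-1)^(n-s)" using assms(2) by (simp add: power_add[symmetric])
  show ?thesis
  proof (cases "odd (n - s)")
    case True
    hence "(-1::real)^n = - ((-1)^s)" using pw by simp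
    thus ?thesis using cm True r0 assms(5) unfolding num_real_roots_def
      by (cases "lead_coeff g > 0") (auto simp: sgn_if)
  next
    case False
    hence "(-1::real)^n = (-1)^s" using pw by simp
    thus ?thesis using cm False r0 assms(5) unfolding num_real_roots_def
      by (cases "lead_coeff g > 0") (auto simp: sgn_if)
  qed
qed

end
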